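(* Let $n\ge 3$ and let $DW_n$ be the double wheel graph. Then $$\chi'(DW_n)=\begin{cases}3(n+1) & \text{if } n \text{ is even},\\ 3n+7 & \text{if } n \text{ is odd}.\end{cases}$$
   Context: The double wheel graph $DW_n=2C_n+K_1$ is obtained from the disjoint union of two cycles $C_n$ by adding one new vertex adjacent to every vertex of both cycles. For a proper colouring $c:V(G)\to\{1,\dots,k\}$ of a graph $G$ (colour $c_i$ identified with the integer $i$), its colouring sum is $\sum_{i=1}^k i\,\theta(c_i)=\sum_{v\in V(G)} c(v)$, where $\theta(c_i)$ is the number of vertices receiving colour $c_i$. The $\chi$-chromatic sum $\chi'(G)$ is the minimum of the colouring sum over all proper colourings of $G$ using exactly $\chi(G)$ colours (the chromatic number), i.e. over all proper colourings $c:V(G)\to\{1,\dots,\chi(G)\}$. *)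

theory Defs
  imports Main
begin

definition proper_colouring :: "'a set \<Rightarrow> ('a \<Rightarrow> 'a \<Rightarrow> bool) \<Rightarrow> nat \<Rightarrow> ('a \<Rightarrow> nat) \<Rightarrow> bool" where
  "proper_colouring V E k c \<longleftrightarrow>
     (\<forall>v\<in>V. c v \<in> {1..k}) \<and> (\<forall>u\<in>V. \<forall>v\<in>V. E u v \<longrightarrow> c u \<noteq> c v)"

definition chromatic_number :: "'a set \<Rightarrow> ('a \<Rightarrow> 'a \<Rightarrow> bool) \<Rightarrow> nat" where
  "chromatic_number V E = (LEAST k. \<exists>c. proper_colouring V E k c)"

definition chi_chromatic_sum :: "'a set \<Rightarrow> ('a \<Rightarrow> 'a \<Rightarrow> bool) \<Rightarrow> nat" where
  "chi_chromatic_sum V E =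
     (LEAST s. \<exists>c. proper_colouring V E (chromatic_number V E) c \<and> s = (\<Sum>v\<in>V. c v))"

text \<open>Double wheel DW_n = 2 C_n + K_1. Hub = None; vertex i (i < n) of cycle b
is Some (b, i); cycle edges join i and (i+1) mod n.\<close>
definition dw_verts :: "nat \<Rightarrow> (bool \<times> nat) option set" where
  "dw_verts n = insert None {Some (b, i) | b i. i < n}"

fun dw_adj :: "nat \<Rightarrow> (bool \<times> nat) option \<Rightarrow> (bool \<times> nat) option \<Rightarrow> bool" where
  "dw_adj n None None = False"
| "dw_adj n None (Some (b, i)) = (i < n)"
| "dw_adj n (Some (b, i)) None = (i < n)"
| "dw_adj n (Some (b, i)) (Some (b', j)) =
     (b = b' \<and> i < n \<and> j < n \<and> (j = (i + 1) mod n \<or> i = (j + 1) mod n))"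

end

theory Submission
  imports Defs
begin

lemma two_col_even:
  fixes f :: "nat \<Rightarrow> nat"
  assumes n: "n \<ge> 1" and ab: "\<forall>i<n. f i \<in> {a,b}"
    and adj: "\<forall>i<n. f i \<noteq> f (Suc i mod n)"
  shows "even n"
proof -
  have key: "i < n \<Longrightarrow> (f i = f 0 \<longleftrightarrow> even i)" for i
  proof (induction i)
    case 0 then show ?case by simp
  next
    case (Suc i)
    then have il: "i < n" by simp
    have "f i \<noteq> f (Suc i)" using adj il Suc.prems by (metis mod_less)
    moreover have "f i \<in> {a,b}" "f (Suc i) \<in> {a,b}" "f 0 \<in> {a,b}" using ab il Suc.prems n by auto
    ultimately have "f (Suc i) = f 0 \<longleftrightarrow> f i \<noteq> f 0" by (simp, elim disjE; simp)
    then show ?case using Suc.IH[OF il] by simp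
  qed
  have "n - 1 < n" using n by simp
  moreover have "Suc (n - 1) mod n = 0" using n by simp
  ultimately have "f (n - 1) \<noteq> f 0" using adj by metis
  then have "odd (n - 1)" using key[of "n-1"] n by simp
  then show ?thesis using n by (cases n) auto
qed

lemma rot_sum:
  fixes f :: "nat \<Rightarrow> nat"
  assumes "n \<ge> 1"
  shows "2 * (\<Sum>i<n. f i) = (\<Sum>i<n. f i + f (Suc i mod n))"
proof -
  obtain m where m: "n = Suc m" using assms by (cases n) auto
  have "(\<Sum>i<n. f (Suc i mod n)) = (\<Sum>i<m. f (Suc i mod n)) + f 0"
    using m by simp
  also have "(\<Sum>i<m. f (Suc i mod n)) = (\<Sum>i<m. f (Suc i))"
    using m by (intro sum.cong) auto
  also have "(\<Sum>i<m. f (Suc i)) + f 0 = (\<Sum>i<n. f i)"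
    unfolding m sum.lessThan_Suc_shift by (rule add.commute)
  finally show ?thesis by (simp add: sum.distrib)
qed

lemma sum_lb2:
  fixes g :: "nat \<Rightarrow> nat"
  assumes "\<forall>i<n. p \<le> g i" "j < n" "k < n" "j \<noteq> k" "p + d \<le> g j" "p + d \<le> g k"
  shows "n * p + 2 * d \<le> (\<Sum>i<n. g i)"
proof -
  have "(\<Sum>i<n. p + (if i \<in> {j,k} then d else 0)) \<le> (\<Sum>i<n. g i)"
    using assms by (intro sum_mono) auto
  moreover have "(\<Sum>i<n. p + (if i \<in> {j,k} then d else 0)) = n * p + 2 * d"
  proof -
    have "(\<Sum>i<n. p + (if i \<in> {j,k} then d else 0)) = (\<Sum>i<n. p + ((if i = j then d else 0) + (if i = k then d else 0)))"
      using assms by (intro sum.cong) auto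
    also have "\<dots> = n * p + 2 * d" using assms by (simp only: sum.distrib sum.delta) simp
    finally show ?thesis .
  qed
  ultimately show ?thesis by simp
qed

lemma cyc_lb:
  fixes f :: "nat \<Rightarrow> nat"
  assumes n: "n \<ge> 2" and pair: "\<forall>i<n. p \<le> f i + f (Suc i mod n)"
    and v: "v < n" and pv: "p + d \<le> f v + m" and mm: "\<forall>i<n. m \<le> f i"
  shows "n * p + 2 * d \<le> 2 * (\<Sum>i<n. f i)"
proof -
  define k where "k = (if v = 0 then n - 1 else v - 1)"
  have k: "k < n" "k \<noteq> v" "Suc k mod n = v" using n v by (auto simp: k_def)
  have "n * p + 2 * d \<le> (\<Sum>i<n. f i + f (Suc i mod n))"
  proof (rule sum_lb2[where j=v and k=k])
    have "Suc v mod n < n" using n by simp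
    then have "m \<le> f (Suc v mod n)" using mm by blast
    then show "p + d \<le> f v + f (Suc v mod n)" using pv by linarith
    have "m \<le> f k" using mm k by blast
    then show "p + d \<le> f k + f (Suc k mod n)" using pv k by simp
    show "\<forall>i<n. p \<le> f i + f (Suc i mod n)" using pair by blast
    show "v < n" by (rule v)
    show "k < n" "v \<noteq> k" using k by auto
  qed
  moreover have "2 * (\<Sum>i<n. f i) = (\<Sum>i<n. f i + f (Suc i mod n))" using rot_sum[of n f] n by simp
  ultimately show ?thesis by linarith
qed

lemma dw_sum:
  "(\<Sum>v\<in>dw_verts n. c v) = c None + (\<Sum>i<n. c (Some (True,i))) + (\<Sum>i<n. c (Some (False,i)))"
proof -
  have eq: "dw_verts n = insert None ((\<lambda>i. Some (True,i)) ` {..<n} \<union> (\<lambda>i. Some (False,i)) ` {..<n})"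
  proof (rule set_eqI)
    fix x show "x \<in> dw_verts n \<longleftrightarrow> x \<in> insert None ((\<lambda>i. Some (True,i)) ` {..<n} \<union> (\<lambda>i. Some (False,i)) ` {..<n})"
    proof (cases x)
      case (Some a) then obtain b i where x: "x = Some (b,i)" by (cases a) auto
      show ?thesis unfolding x dw_verts_def by (cases b) auto
    qed (auto simp: dw_verts_def)
  qed
  have "(\<Sum>v\<in>dw_verts n. c v) = c None + (\<Sum>v\<in>(\<lambda>i. Some (True,i)) ` {..<n} \<union> (\<lambda>i. Some (False,i)) ` {..<n}. c v)"
    unfolding eq by (subst sum.insert) auto
  also have "\<dots> = c None + ((\<Sum>v\<in>(\<lambda>i. Some (True,i)) ` {..<n}. c v) + (\<Sum>v\<in>(\<lambda>i. Some (False,i)) ` {..<n}. c v))"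
    by (subst sum.union_disjoint) auto
  also have "\<dots> = c None + (\<Sum>i<n. c (Some (True,i))) + (\<Sum>i<n. c (Some (False,i)))"
    by (subst sum.reindex, simp add: inj_on_def)+ (simp add: add.assoc)
  finally show ?thesis .
qed

lemma col_facts:
  assumes "proper_colouring (dw_verts n) (dw_adj n) k c"
  shows "c None \<in> {1..k}"
    and "\<And>b i. i < n \<Longrightarrow> c (Some (b,i)) \<in> {1..k}"
    and "\<And>b i. i < n \<Longrightarrow> c (Some (b,i)) \<noteq> c None"
    and "\<And>b i. i < n \<Longrightarrow> c (Some (b,i)) \<noteq> c (Some (b, Suc i mod n))"
proof -
  have V: "None \<in> dw_verts n" "\<And>b i. i < n \<Longrightarrow> Some (b,i) \<in> dw_verts n"
    by (auto simp: dw_verts_def)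
  note P = assms[unfolded proper_colouring_def]
  show "c None \<in> {1..k}" using P V by blast
  show "\<And>b i. i < n \<Longrightarrow> c (Some (b,i)) \<in> {1..k}" using P V by blast
  show "\<And>b i. i < n \<Longrightarrow> c (Some (b,i)) \<noteq> c None"
  proof -
    fix b i assume i: "i < n"
    then have "dw_adj n (Some (b,i)) None" by simp
    then show "c (Some (b,i)) \<noteq> c None" using P V i by blast
  qed
  show "\<And>b i. i < n \<Longrightarrow> c (Some (b,i)) \<noteq> c (Some (b, Suc i mod n))"
  proof -
    fix b i assume i: "i < n"
    then have n: "0 < n" by simp
    then have "dw_adj n (Some (b,i)) (Some (b, Suc i mod n))" using i by simp
    moreover have "Suc i mod n < n" using n by simp
    ultimately show "c (Some (b,i)) \<noteq> c (Some (b, Suc i mod n))" using P V i by blast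
  qed
qed



lemma pairs_lb:
  fixes f :: "nat \<Rightarrow> nat"
  assumes "n \<ge> 1" "\<forall>i<n. p \<le> f i + f (Suc i mod n)"
  shows "n * p \<le> 2 * (\<Sum>i<n. f i)"
proof -
  have "(\<Sum>i<n. p) \<le> (\<Sum>i<n. f i + f (Suc i mod n))"
    using assms(2) by (intro sum_mono) auto
  then show ?thesis using rot_sum[of n f] assms(1) by simp
qed

lemma pair3: "1 \<le> x \<Longrightarrow> x \<le> 3 \<Longrightarrow> 1 \<le> y \<Longrightarrow> y \<le> (3::nat) \<Longrightarrow> x \<noteq> y \<Longrightarrow> x \<noteq> h \<Longrightarrow> y \<noteq> h
  \<Longrightarrow> (if h = 1 then 5 else if h = 2 then 4 else 3) \<le> x + y"
  by (simp split: if_split)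

lemma pair4: "1 \<le> x \<Longrightarrow> x \<le> 4 \<Longrightarrow> 1 \<le> y \<Longrightarrow> y \<le> (4::nat) \<Longrightarrow> x \<noteq> y \<Longrightarrow> x \<noteq> h \<Longrightarrow> y \<noteq> h
  \<Longrightarrow> (if h = 1 then 5 else if h = 2 then 4 else 3) \<le> x + y"
  by (simp split: if_split)

lemma cyc_even:
  fixes f :: "nat \<Rightarrow> nat"
  assumes n: "n \<ge> 3" and r: "\<forall>i<n. f i \<in> {1..3}" and hh: "\<forall>i<n. f i \<noteq> h"
    and adj: "\<forall>i<n. f i \<noteq> f (Suc i mod n)"
  shows "n * (if h = 1 then 5 else if h = 2 then 4 else 3) \<le> 2 * (\<Sum>i<n. f i)"
proof (rule pairs_lb)
  show "n \<ge> 1" using n by simp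
  show "\<forall>i<n. (if h = 1 then 5 else if h = 2 then 4 else 3) \<le> f i + f (Suc i mod n)"
  proof (intro allI impI)
    fix i assume i: "i < n"
    then have j: "Suc i mod n < n" by simp
    show "(if h = 1 then 5 else if h = 2 then 4 else 3) \<le> f i + f (Suc i mod n)"
      using r hh adj i j by (intro pair3) auto
  qed
qed

lemma exists_other:
  fixes f :: "nat \<Rightarrow> nat"
  assumes n: "n \<ge> 3" "odd n" and adj: "\<forall>i<n. f i \<noteq> f (Suc i mod n)"
  shows "\<exists>v<n. f v \<notin> {a,b}"
  using two_col_even[of n f a b] assms by auto

lemma cyc_odd:
  fixes f :: "nat \<Rightarrow> nat"
  assumes n: "n \<ge> 3" "odd n" and r: "\<forall>i<n. f i \<in> {1..4}" and hh: "\<forall>i<n. f i \<noteq> h"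
    and adj: "\<forall>i<n. f i \<noteq> f (Suc i mod n)" and h: "h \<in> {1..4}"
  shows "(if h = 1 then 5 * n else if h = 2 then 4 * n + 2 else if h = 3 then 3 * n + 5 else 3 * n + 3)
         \<le> 2 * (\<Sum>i<n. f i)"
proof -
  define p :: nat where "p = (if h = 1 then 5 else if h = 2 then 4 else 3)"
  have pair: "\<forall>i<n. p \<le> f i + f (Suc i mod n)"
  proof (intro allI impI)
    fix i assume i: "i < n"
    then have j: "Suc i mod n < n" by simp
    show "p \<le> f i + f (Suc i mod n)"
      unfolding p_def using r hh adj i j by (intro pair4) auto
  qed
  have mm: "\<forall>i<n. 1 \<le> f i" using r by auto
  have n2: "n \<ge> 2" using n by simp
  consider "h = 1" | "h = 2" | "h = 3" | "h = 4" using h by force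
  then show ?thesis
  proof cases
    case 1
    then have "n * 5 \<le> 2 * (\<Sum>i<n. f i)" using pairs_lb[OF _ pair] n unfolding p_def by simp
    then show ?thesis using 1 by simp
  next
    case 2
    obtain v where v: "v < n" "f v \<notin> {1,3}" using exists_other[OF n adj] by blast
    then have "f v = 4" using r hh 2 by force
    then have "n * 4 + 2 * 1 \<le> 2 * (\<Sum>i<n. f i)"
      using cyc_lb[OF n2 pair v(1), of 1 1] mm 2 unfolding p_def by simp
    then show ?thesis using 2 by simp
  next
    case 3
    obtain v where v: "v < n" "f v \<notin> {1,2}" using exists_other[OF n adj] by blast
    then have "f v = 4" using r hh 3 by force
    then have "n * 3 + 2 * 2 \<le> 2 * (\<Sum>i<n. f i)"
      using cyc_lb[OF n2 pair v(1), of 2 1] mm 3 unfolding p_def by simp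
    then show ?thesis using 3 n by presburger
  next
    case 4
    obtain v where v: "v < n" "f v \<notin> {1,2}" using exists_other[OF n adj] by blast
    then have "f v = 3" using r hh 4 by force
    then have "n * 3 + 2 * 1 \<le> 2 * (\<Sum>i<n. f i)"
      using cyc_lb[OF n2 pair v(1), of 1 1] mm 4 unfolding p_def by simp
    then show ?thesis using 4 n by presburger
  qed
qed

definition ce :: "(bool \<times> nat) option \<Rightarrow> nat" where
  "ce x = (case x of None \<Rightarrow> 3 | Some (b, i) \<Rightarrow> if even i then 1 else 2)"

definition co :: "nat \<Rightarrow> (bool \<times> nat) option \<Rightarrow> nat" where
  "co n x = (case x of None \<Rightarrow> 4 | Some (b, i) \<Rightarrow> if i = n - 1 then 3 else if even i then 1 else 2)"

lemma even_mod: "even n \<Longrightarrow> i < n \<Longrightarrow> even (Suc i mod n) \<longleftrightarrow> odd i"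
proof (cases "Suc i < n")
  case False
  assume "even n" "i < n"
  then have "Suc i = n" using False by simp
  then show ?thesis using \<open>even n\<close> by auto
qed simp

lemma dw_adj_cases:
  assumes "dw_adj n (Some (b,i)) (Some (b',j))"
  shows "b = b'" "i < n" "j < n" "j = Suc i mod n \<or> i = Suc j mod n"
  using assms by auto

lemma proper_ce:
  assumes "even n" "n \<ge> 3"
  shows "proper_colouring (dw_verts n) (dw_adj n) 3 ce"
  unfolding proper_colouring_def
proof (intro conjI ballI impI)
  fix v assume "v \<in> dw_verts n" then show "ce v \<in> {1..3}"
    by (auto simp: ce_def split: option.splits)
next
  fix u v assume uv: "u \<in> dw_verts n" "v \<in> dw_verts n" and e: "dw_adj n u v"
  show "ce u \<noteq> ce v"
  proof (cases u)
    case None then show ?thesis using uv e by (auto simp: ce_def dw_verts_def split: if_splits)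
  next
    case (Some a)
    then obtain b i where u: "u = Some (b,i)" by (cases a) auto
    show ?thesis
    proof (cases v)
      case None then show ?thesis using u by (auto simp: ce_def split: if_splits)
    next
      case (Some a')
      then obtain b' j where v: "v = Some (b',j)" by (cases a') auto
      have "i < n" "j < n" "j = Suc i mod n \<or> i = Suc j mod n" using e u v by auto
      then have "even i \<longleftrightarrow> odd j" using even_mod[OF assms(1)] by auto
      then show ?thesis using u v by (auto simp: ce_def)
    qed
  qed
qed

lemma proper_co:
  assumes "odd n" "n \<ge> 3"
  shows "proper_colouring (dw_verts n) (dw_adj n) 4 (co n)"
  unfolding proper_colouring_def
proof (intro conjI ballI impI)
  fix v assume "v \<in> dw_verts n" then show "co n v \<in> {1..4}"
    by (auto simp: co_def split: option.splits)
next
  fix u v assume uv: "u \<in> dw_verts n" "v \<in> dw_verts n" and e: "dw_adj n u v"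
  show "co n u \<noteq> co n v"
  proof (cases u)
    case None then show ?thesis using uv e by (auto simp: co_def dw_verts_def split: if_splits)
  next
    case (Some a)
    then obtain b i where u: "u = Some (b,i)" by (cases a) auto
    show ?thesis
    proof (cases v)
      case None then show ?thesis using u by (auto simp: co_def split: if_splits)
    next
      case (Some a')
      then obtain b' j where v: "v = Some (b',j)" by (cases a') auto
      have ij: "i < n" "j < n" "j = Suc i mod n \<or> i = Suc j mod n" using e u v by auto
      have key: "co n (Some (b1, x)) \<noteq> co n (Some (b2, y))"
        if xy: "x < n" "y = Suc x mod n" for x y b1 b2
      proof (cases "Suc x < n")
        case True
        then have "y = Suc x" using xy by simp
        then show ?thesis using True by (auto simp: co_def)
      next
        case False
        then have sx: "Suc x = n" using xy by simp
        then have "x = n - 1" "y = 0" using xy by auto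
        then show ?thesis using assms by (auto simp: co_def)
      qed
      show ?thesis using ij(3)
      proof
        assume "j = Suc i mod n" then show ?thesis using key[of i j b b'] ij u v by simp
      next
        assume "i = Suc j mod n" then show ?thesis using key[of j i b' b] ij u v by auto
      qed
    qed
  qed
qed

lemma sum_alt: "(\<Sum>i<2*m. if even i then 1 else (2::nat)) = 3 * m"
  by (induction m) auto

lemma chrom:
  assumes n: "n \<ge> 3"
  shows "chromatic_number (dw_verts n) (dw_adj n) = (if even n then 3 else 4)"
  unfolding chromatic_number_def
proof (rule Least_equality)
  show "\<exists>c. proper_colouring (dw_verts n) (dw_adj n) (if even n then 3 else 4) c"
    using proper_ce[OF _ n] proper_co[OF _ n] by auto
next
  fix k assume "\<exists>c. proper_colouring (dw_verts n) (dw_adj n) k c"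
  then obtain c where c: "proper_colouring (dw_verts n) (dw_adj n) k c" by blast
  note F = col_facts[OF c]
  show "(if even n then 3 else 4) \<le> k"
  proof (rule ccontr)
    assume lt: "\<not> (if even n then 3 else 4) \<le> k"
    have 0: "0 < n" "Suc 0 < n" using n by auto
    have "c (Some (True,0)) \<noteq> c (Some (True, 1))"
      using F(4)[OF 0(1), of True] 0 by simp
    then have k3: "k \<ge> 3"
      using F(1) F(2)[OF 0(1), of True] F(2)[OF 0(2), of True] F(3)[OF 0(1), of True] F(3)[OF 0(2), of True]
      by auto
    then have "odd n" "k = 3" using lt by (auto split: if_splits)
    define h where "h = c None"
    have h: "h \<in> {1..3}" using F(1) \<open>k = 3\<close> h_def by simp
    define f where "f i = c (Some (True, i))" for i
    have fr: "\<forall>i<n. f i \<in> {1..3} \<and> f i \<noteq> h" using F(2) F(3) \<open>k = 3\<close> unfolding f_def h_def by auto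
    have fa: "\<forall>i<n. f i \<noteq> f (Suc i mod n)" using F(4) unfolding f_def by auto
    have "\<exists>a b. \<forall>i<n. f i \<in> {a,b}"
    proof -
      consider "h = 1" | "h = 2" | "h = 3" using h by force
      then show ?thesis
      proof cases
        case 1 then show ?thesis using fr by (intro exI[of _ 2] exI[of _ 3]) force
      next
        case 2 then show ?thesis using fr by (intro exI[of _ 1] exI[of _ 3]) force
      next
        case 3 then show ?thesis using fr by (intro exI[of _ 1] exI[of _ 2]) force
      qed
    qed
    then obtain a b where "\<forall>i<n. f i \<in> {a,b}" by blast
    then have "even n" using two_col_even[of n f a b] fa n by simp
    then show False using \<open>odd n\<close> by simp
  qed
qed

theorem proposition2p1:
  fixes n :: nat
  assumes "n \<ge> 3"
  shows "chi_chromatic_sum (dw_verts n) (dw_adj n) =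
           (if even n then 3 * (n + 1) else 3 * n + 7)"
proof -
  have n: "n \<ge> 3" by (rule assms)
  let ?K = "if even n then 3 else 4"
  let ?T = "if even n then 3 * (n + 1) else 3 * n + 7"
  have lb: "?T \<le> (\<Sum>v\<in>dw_verts n. c v)" if c: "proper_colouring (dw_verts n) (dw_adj n) ?K c" for c
  proof -
    note F = col_facts[OF c]
    define h where "h = c None"
    define f1 where "f1 i = c (Some (True, i))" for i
    define f2 where "f2 i = c (Some (False, i))" for i
    have S: "(\<Sum>v\<in>dw_verts n. c v) = h + (\<Sum>i<n. f1 i) + (\<Sum>i<n. f2 i)"
      unfolding h_def f1_def f2_def by (rule dw_sum)
    show ?thesis
    proof (cases "even n")
      case True
      have h: "h \<in> {1..3}" using F(1) True h_def by simp
      have "n * (if h = 1 then 5 else if h = 2 then 4 else 3) \<le> 2 * (\<Sum>i<n. f1 i)"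
        using F(2)[of _ True] F(3)[of _ True] F(4)[of _ True] True n
        by (intro cyc_even) (auto simp: f1_def h_def)
      moreover have "n * (if h = 1 then 5 else if h = 2 then 4 else 3) \<le> 2 * (\<Sum>i<n. f2 i)"
        using F(2)[of _ False] F(3)[of _ False] F(4)[of _ False] True n
        by (intro cyc_even) (auto simp: f2_def h_def)
      moreover have "h = 1 \<or> h = 2 \<or> h = 3" using h by auto
      ultimately show ?thesis using S True n by (elim disjE; simp; linarith?)
    next
      case False
      have h: "h \<in> {1..4}" using F(1) False h_def by simp
      have "(if h = 1 then 5 * n else if h = 2 then 4 * n + 2 else if h = 3 then 3 * n + 5 else 3 * n + 3)
         \<le> 2 * (\<Sum>i<n. f1 i)"
        using F(2)[of _ True] F(3)[of _ True] F(4)[of _ True] False n h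
        by (intro cyc_odd) (auto simp: f1_def h_def)
      moreover have "(if h = 1 then 5 * n else if h = 2 then 4 * n + 2 else if h = 3 then 3 * n + 5 else 3 * n + 3)
         \<le> 2 * (\<Sum>i<n. f2 i)"
        using F(2)[of _ False] F(3)[of _ False] F(4)[of _ False] False n h
        by (intro cyc_odd) (auto simp: f2_def h_def)
      moreover have "h = 1 \<or> h = 2 \<or> h = 3 \<or> h = 4" using h by auto
      ultimately show ?thesis using S False n by (elim disjE; simp; linarith?)
    qed
  qed
  have ex: "\<exists>c. proper_colouring (dw_verts n) (dw_adj n) ?K c \<and> ?T = (\<Sum>v\<in>dw_verts n. c v)"
  proof (cases "even n")
    case True
    then obtain m where m: "n = 2 * m" by blast
    have "(\<Sum>v\<in>dw_verts n. ce v) = 3 + 3 * m + 3 * m"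
      unfolding dw_sum by (simp add: ce_def m sum_alt)
    then show ?thesis using proper_ce[OF True n] True m by (intro exI[of _ ce]) simp
  next
    case False
    then obtain m where m: "n = 2 * m + 1" using oddE by blast
    have s: "(\<Sum>i<n. co n (Some (b, i))) = 3 * m + 3" for b
    proof -
      have "(\<Sum>i<n. co n (Some (b, i))) = (\<Sum>i<2*m. co n (Some (b, i))) + 3"
        using m by (simp add: co_def)
      also have "(\<Sum>i<2*m. co n (Some (b, i))) = (\<Sum>i<2*m. if even i then 1 else (2::nat))"
        using m by (intro sum.cong) (auto simp: co_def)
      finally show ?thesis by (simp add: sum_alt)
    qed
    have "(\<Sum>v\<in>dw_verts n. co n v) = 4 + (3 * m + 3) + (3 * m + 3)"
      unfolding dw_sum s by (simp add: co_def)
    then show ?thesis using proper_co[OF False n] False m by (intro exI[of _ "co n"]) simp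
  qed
  show ?thesis
    unfolding chi_chromatic_sum_def chrom[OF n]
  proof (rule Least_equality)
    show "\<exists>c. proper_colouring (dw_verts n) (dw_adj n) ?K c \<and> ?T = (\<Sum>v\<in>dw_verts n. c v)" by (rule ex)
  next
    fix s assume "\<exists>c. proper_colouring (dw_verts n) (dw_adj n) ?K c \<and> s = (\<Sum>v\<in>dw_verts n. c v)"
    then show "?T \<le> s" using lb by blast
  qed
qed

end
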